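(* The Poincar\'e series of $\mathrm{Kh}_{alg}(3,\infty;\mathbb{Q})$ is $$P_{3,\infty}(q,t)=\frac{(1+q^{10}t^5)(1+q^2+q^4t^2)}{1-q^6t^4}+q^8t^3.$$
   Context: For $n\ge1$, $A_n(\mathbb{Q})=\mathbb{Q}[x_0,\dots,x_{n-1}]\otimes\Lambda[\xi_0,\dots,\xi_{n-1}]$ is the free graded-commutative algebra on even $x_k$ (of $q$-degree $2k+2$, $t$-degree $2k$) and odd $\xi_k$ (of $q$-degree $2k+4$, $t$-degree $2k+1$), with $d_2$ the odd derivation given by $d_2(x_k)=0$, $d_2(\xi_k)=\sum_{i=0}^k x_ix_{k-i}$. $\mathrm{Kh}_{alg}(n,\infty;\mathbb{Q})=H(A_n(\mathbb{Q}),d_2)$, and its Poincar\'e series is $\sum_{a,b}\dim \mathrm{Kh}_{alg}^{a,b}\,q^at^b$ ($a$ = $q$-degree, $b$ = $t$-degree). *)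

theory Defs
  imports Main "HOL-Library.Function_Algebras" "HOL-Computational_Algebra.Formal_Power_Series"
begin

text \<open>A monomial x^e \<xi>_S of A_n: e = exponent vector of the even generators x_k,
  S = set of indices of the odd generators \<xi>_k, ordered increasingly
  \<xi>_{s1} \<xi>_{s2} ... with s1 < s2 < ...\<close>
type_synonym mon = "(nat \<Rightarrow> nat) \<times> nat set"

definition qdeg :: "mon \<Rightarrow> nat" where
  "qdeg m = (\<Sum>k\<in>{k. fst m k \<noteq> 0}. fst m k * (2*k+2)) + (\<Sum>k\<in>snd m. 2*k+4)"

definition tdeg :: "mon \<Rightarrow> nat" where
  "tdeg m = (\<Sum>k\<in>{k. fst m k \<noteq> 0}. fst m k * (2*k)) + (\<Sum>k\<in>snd m. 2*k+1)"

definition mons :: "nat \<Rightarrow> nat \<Rightarrow> nat \<Rightarrow> mon set" where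
  "mons n a b = {m. (\<forall>k. n \<le> k \<longrightarrow> fst m k = 0) \<and> snd m \<subseteq> {..<n}
                    \<and> qdeg m = a \<and> tdeg m = b}"

definition unitv :: "nat \<Rightarrow> nat \<Rightarrow> nat" where
  "unitv i = (\<lambda>k. if k = i then 1 else 0)"

text \<open>Coefficient of the monomial m' in d_2(m): the odd derivation with
  d_2(x_k) = 0, d_2(\<xi>_s) = \<Sum>_{i=0}^s x_i x_{s-i}; the Koszul sign of
  differentiating \<xi>_s inside \<xi>_S is (-1)^(number of elements of S below s).\<close>
definition dcoef :: "mon \<Rightarrow> mon \<Rightarrow> rat" where
  "dcoef m m' = (\<Sum>s\<in>snd m.
      if snd m' = snd m - {s} then
        (-1) ^ card {j\<in>snd m. j < s} *
        (\<Sum>i\<le>s. if fst m' = (\<lambda>k. fst m k + unitv i k + unitv (s - i) k) then 1 else 0)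
      else 0)"

text \<open>Elements of A_n(Q) are finitely supported rational combinations of monomials.\<close>
definition d2 :: "(mon \<Rightarrow> rat) \<Rightarrow> (mon \<Rightarrow> rat)" where
  "d2 f = (\<lambda>m'. \<Sum>m\<in>{m. f m \<noteq> 0}. f m * dcoef m m')"

definition Apiece :: "nat \<Rightarrow> nat \<Rightarrow> nat \<Rightarrow> (mon \<Rightarrow> rat) set" where
  "Apiece n a b = {f. \<forall>m. f m \<noteq> 0 \<longrightarrow> m \<in> mons n a b}"

definition qscale :: "rat \<Rightarrow> (mon \<Rightarrow> rat) \<Rightarrow> (mon \<Rightarrow> rat)" where
  "qscale c f = (\<lambda>m. c * f m)"

text \<open>dim Kh_alg^{a,b}(n,\<infinity>;Q) = dim (ker d_2 on A^{a,b}) - dim (d_2(A^{a,b+1})),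
  (d_2 preserves q-degree and lowers t-degree by 1).\<close>
definition dimKh :: "nat \<Rightarrow> nat \<Rightarrow> nat \<Rightarrow> nat" where
  "dimKh n a b =
     vector_space.dim qscale {f\<in>Apiece n a b. d2 f = (\<lambda>_. 0)}
     - vector_space.dim qscale (d2 ` Apiece n a (b+1))"

definition PoincareKh :: "nat \<Rightarrow> rat fps fps" where
  "PoincareKh n = Abs_fps (\<lambda>a. Abs_fps (\<lambda>b. of_nat (dimKh n a b)))"

definition qvar :: "rat fps fps" where "qvar = fps_X"
definition tvar :: "rat fps fps" where "tvar = fps_const fps_X"

end

theory Submission
  imports Defs "HOL-Library.Product_Lexorder"
begin

interpretation V: vector_space qscale
  by unfold_locales (auto simp: qscale_def fun_eq_iff algebra_simps)

lemma sum_fun_apply: "(\<Sum>i\<in>A. f i) x = (\<Sum>i\<in>A. f i x)"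
  by (induct A rule: infinite_finite_induct) auto

lemma qscale_apply[simp]: "qscale c f x = c * f x"
  by (simp add: qscale_def)

lemma d2_eq: "finite F \<Longrightarrow> {m. f m \<noteq> 0} \<subseteq> F \<Longrightarrow> d2 f = (\<lambda>m'. \<Sum>m\<in>F. f m * dcoef m m')"
  unfolding d2_def by (rule ext, rule sum.mono_neutral_left) auto

definition LF :: "mon set \<Rightarrow> (mon \<Rightarrow> rat) \<Rightarrow> (mon \<Rightarrow> rat)" where
  "LF F f = (\<lambda>m'. \<Sum>m\<in>F. f m * dcoef m m')"

lemma LF_add: "LF F (f + g) = LF F f + LF F g"
  by (auto simp: LF_def fun_eq_iff algebra_simps sum.distrib)

lemma LF_scale: "LF F (qscale c f) = qscale c (LF F f)"
  by (auto simp: LF_def fun_eq_iff algebra_simps sum_distrib_left)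

lemma LF_zero: "LF F 0 = 0"
  by (auto simp: LF_def fun_eq_iff)

lemma LF_sum: "LF F (\<Sum>v\<in>T. qscale (u v) (x v)) = (\<Sum>v\<in>T. qscale (u v) (LF F (x v)))"
proof (induct T rule: infinite_finite_induct)
  case (infinite A) thus ?case by (simp only: sum.infinite[OF infinite] LF_zero)
next
  case empty thus ?case by (simp only: sum.empty LF_zero)
next
  case (insert y T) thus ?case by (simp only: sum.insert[OF insert.hyps(1,2)] LF_add LF_scale insert.hyps(3))
qed

definition delta :: "mon \<Rightarrow> mon \<Rightarrow> rat" where
  "delta m = (\<lambda>x. if x = m then 1 else 0)"

lemma expand_delta:
  assumes "finite F" "\<forall>m. f m \<noteq> 0 \<longrightarrow> m \<in> F"
  shows "f = (\<Sum>m\<in>F. qscale (f m) (delta m))"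
proof
  fix x
  have "(\<Sum>m\<in>F. qscale (f m) (delta m)) x = (\<Sum>m\<in>F. f m * (if x = m then 1 else 0))"
    by (simp add: sum_fun_apply delta_def)
  also have "\<dots> = (\<Sum>m\<in>F. if x = m then f m else 0)"
    by (rule sum.cong) auto
  also have "\<dots> = (if x \<in> F then f x else 0)"
    using assms(1) by (simp add: sum.delta)
  also have "\<dots> = f x" using assms(2) by metis
  finally show "f x = (\<Sum>m\<in>F. qscale (f m) (delta m)) x" by simp
qed

lemma indep_no_zero: "V.independent (B::(mon\<Rightarrow>rat) set) \<Longrightarrow> (0::mon\<Rightarrow>rat) \<notin> B"
proof
  assume "V.independent B" "0 \<in> B"
  from \<open>0 \<in> B\<close> have "V.dependent B" by (rule V.dependent_zero)
  with \<open>V.independent B\<close> show False by contradiction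
qed

lemma rank_nullity_le:
  assumes F: "finite F"
  defines "A \<equiv> {f. \<forall>m. f m \<noteq> 0 \<longrightarrow> m \<in> F}"
  shows "V.dim {f\<in>A. d2 f = (\<lambda>_. 0)} + V.dim (d2 ` A) \<le> card F"
proof -
  let ?Z = "{f\<in>A. d2 f = (\<lambda>_. 0)}"
  have d2A: "d2 f = LF F f" if "f \<in> A" for f
    using that F unfolding A_def LF_def by (intro d2_eq) auto
  have Aspan: "A \<subseteq> V.span (delta ` F)"
  proof
    fix f assume "f \<in> A"
    hence "f = (\<Sum>m\<in>F. qscale (f m) (delta m))" using F unfolding A_def by (intro expand_delta) auto
    also have "\<dots> \<in> V.span (delta ` F)"
      by (intro V.span_sum V.span_scale V.span_base) auto
    finally show "f \<in> V.span (delta ` F)" .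
  qed
  have Rspan: "d2 ` A \<subseteq> V.span (LF F ` delta ` F)"
  proof
    fix y assume "y \<in> d2 ` A"
    then obtain f where f: "f \<in> A" "y = d2 f" by auto
    have "f = (\<Sum>m\<in>F. qscale (f m) (delta m))" using F f(1) unfolding A_def by (intro expand_delta) auto
    hence "y = LF F (\<Sum>m\<in>F. qscale (f m) (delta m))"
      using f d2A by metis
    also have "\<dots> = (\<Sum>m\<in>F. qscale (f m) (LF F (delta m)))" by (rule LF_sum)
    also have "\<dots> \<in> V.span (LF F ` delta ` F)"
      by (intro V.span_sum V.span_scale V.span_base) auto
    finally show "y \<in> V.span (LF F ` delta ` F)" .
  qed
  obtain Bz where Bz: "Bz \<subseteq> ?Z" "V.independent Bz" "?Z \<subseteq> V.span Bz" "card Bz = V.dim ?Z"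
    by (rule V.basis_exists)
  obtain Br where Br: "Br \<subseteq> d2 ` A" "V.independent Br" "d2 ` A \<subseteq> V.span Br" "card Br = V.dim (d2 ` A)"
    by (rule V.basis_exists)
  have "Bz \<subseteq> V.span (delta ` F)" using Bz(1) Aspan by blast
  from V.independent_span_bound[OF finite_imageI[OF F] Bz(2) this]
  have finBz: "finite Bz" by simp
  have "Br \<subseteq> V.span (LF F ` delta ` F)" using Br(1) Rspan by blast
  from V.independent_span_bound[OF finite_imageI[OF finite_imageI[OF F]] Br(2) this]
  have finBr: "finite Br" by simp
  define g where "g r = (SOME f. f \<in> A \<and> d2 f = r)" for r
  have g: "g r \<in> A \<and> d2 (g r) = r" if "r \<in> Br" for r
  proof -
    from that Br(1) have "r \<in> d2 ` A" by blast
    then obtain f where "f \<in> A" "d2 f = r" by blast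
    thus ?thesis unfolding g_def by (rule someI[where P="\<lambda>f. f \<in> A \<and> d2 f = r", OF conjI])
  qed
  have ginj: "inj_on g Br"
  proof (rule inj_onI)
    fix x y assume xy: "x \<in> Br" "y \<in> Br" "g x = g y"
    have "x = d2 (g x)" using g[OF xy(1)] by (simp only: conj_commute)
    also have "\<dots> = d2 (g y)" by (simp only: xy(3))
    also have "\<dots> = y" using g[OF xy(2)] by (simp only: conj_commute)
    finally show "x = y" .
  qed
  have Br0: "0 \<notin> Br" by (rule indep_no_zero[OF Br(2)])
  have disj: "Bz \<inter> g ` Br = {}"
  proof (rule ccontr)
    assume "Bz \<inter> g ` Br \<noteq> {}"
    then obtain r where r: "r \<in> Br" "g r \<in> Bz" by blast
    hence "d2 (g r) = (\<lambda>_. 0)" using Bz(1) by blast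
    hence "r = 0" using g[OF r(1)] by (simp add: zero_fun_def)
    thus False using Br0 r by blast
  qed
  let ?U = "Bz \<union> g ` Br"
  have finU: "finite ?U" using finBz finBr by auto
  have UA: "?U \<subseteq> A" using Bz(1) g by auto
  have indU: "V.independent ?U"
  proof (rule V.independent_if_scalars_zero[OF finU])
    fix c x assume sum0: "(\<Sum>x\<in>?U. qscale (c x) x) = 0" and xU: "x \<in> ?U"
    have split: "(\<Sum>x\<in>?U. qscale (c x) x) = (\<Sum>x\<in>Bz. qscale (c x) x) + (\<Sum>x\<in>g ` Br. qscale (c x) x)"
      using finBz finBr disj by (simp add: sum.union_disjoint)
    have "LF F (\<Sum>x\<in>?U. qscale (c x) x) = 0" using sum0 LF_zero by simp
    hence "(\<Sum>x\<in>Bz. qscale (c x) (LF F x)) + (\<Sum>x\<in>g ` Br. qscale (c x) (LF F x)) = 0"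
      using split by (simp add: LF_add LF_sum)
    moreover have "(\<Sum>x\<in>Bz. qscale (c x) (LF F x)) = 0"
    proof (rule sum.neutral, rule ballI)
      fix x assume "x \<in> Bz"
      hence "LF F x = 0" using Bz(1) d2A by (auto simp: zero_fun_def)
      thus "qscale (c x) (LF F x) = 0" by (simp add: qscale_def zero_fun_def)
    qed
    moreover have "(\<Sum>x\<in>g ` Br. qscale (c x) (LF F x)) = (\<Sum>r\<in>Br. qscale (c (g r)) (LF F (g r)))"
      using sum.reindex[OF ginj, of "\<lambda>x. qscale (c x) (LF F x)"] by (simp add: comp_def)
    moreover have "(\<Sum>r\<in>Br. qscale (c (g r)) (LF F (g r))) = (\<Sum>r\<in>Br. qscale (c (g r)) r)"
    proof (rule sum.cong[OF refl])
      fix r assume "r \<in> Br"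
      hence "LF F (g r) = r" using g d2A by metis
      thus "qscale (c (g r)) (LF F (g r)) = qscale (c (g r)) r" by simp
    qed
    ultimately have S0: "(\<Sum>r\<in>Br. qscale (c (g r)) r) = 0" by simp
    have HB: "\<forall>u. (\<Sum>v\<in>Br. qscale (u v) v) = 0 \<longrightarrow> (\<forall>v\<in>Br. u v = 0)"
      using Br(2) finBr unfolding V.independent_explicit_finite_subsets by blast
    have cr: "\<forall>r\<in>Br. c (g r) = 0" using HB[rule_format, of "\<lambda>r. c (g r)", OF S0] by blast
    hence "(\<Sum>x\<in>g ` Br. qscale (c x) x) = 0"
      by (intro sum.neutral) (auto simp: qscale_def zero_fun_def)
    hence S1: "(\<Sum>x\<in>Bz. qscale (c x) x) = 0" using sum0 split by simp
    have HZ: "\<forall>u. (\<Sum>v\<in>Bz. qscale (u v) v) = 0 \<longrightarrow> (\<forall>v\<in>Bz. u v = 0)"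
      using Bz(2) finBz unfolding V.independent_explicit_finite_subsets by blast
    have "\<forall>x\<in>Bz. c x = 0" using HZ[rule_format, of c, OF S1] by blast
    thus "c x = 0" using cr xU by auto
  qed
  have "card ?U \<le> card (delta ` F)"
    using V.independent_span_bound[OF finite_imageI[OF F] indU] UA Aspan by blast
  also have "\<dots> \<le> card F" using F by (rule card_image_le)
  finally have "card ?U \<le> card F" .
  moreover have "card ?U = card Bz + card Br"
    using finBz finBr disj by (simp add: card_Un_disjoint card_image[OF ginj])
  ultimately show ?thesis using Bz Br by simp
qed

lemma pivot_indep:
  fixes key :: "mon \<Rightarrow> 'k::linorder" and x :: "'i \<Rightarrow> mon \<Rightarrow> rat"
  assumes fin: "finite I" and inj: "inj_on (\<lambda>i. key (p i)) I"
    and piv: "\<And>i. i \<in> I \<Longrightarrow> x i (p i) \<noteq> 0"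
    and above: "\<And>i m. i \<in> I \<Longrightarrow> key (p i) < key m \<Longrightarrow> x i m = 0"
  shows "inj_on x I" "V.independent (x ` I)"
proof -
  show xinj: "inj_on x I"
  proof (rule inj_onI)
    fix i j assume ij: "i \<in> I" "j \<in> I" "x i = x j"
    show "i = j"
    proof (rule ccontr)
      assume "i \<noteq> j"
      hence "key (p i) \<noteq> key (p j)" using inj ij by (meson inj_onD)
      hence "key (p i) < key (p j) \<or> key (p j) < key (p i)" by auto
      thus False
      proof
        assume "key (p i) < key (p j)"
        hence "x i (p j) = 0" using above ij(1) by blast
        thus False using piv[OF ij(2)] ij(3) by simp
      next
        assume "key (p j) < key (p i)"
        hence "x j (p i) = 0" using above ij(2) by blast
        thus False using piv[OF ij(1)] ij(3) by simp
      qed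
    qed
  qed
  show "V.independent (x ` I)"
  proof (rule V.independent_if_scalars_zero)
    show "finite (x ` I)" using fin by simp
    fix c v assume sum0: "(\<Sum>v\<in>x ` I. qscale (c v) v) = 0" and v: "v \<in> x ` I"
    have sumI: "(\<Sum>i\<in>I. qscale (c (x i)) (x i)) = 0"
      using sum0 sum.reindex[OF xinj, of "\<lambda>v. qscale (c v) v"] by (simp add: comp_def)
    show "c v = 0"
    proof (rule ccontr)
      assume cv: "c v \<noteq> 0"
      let ?J = "{i\<in>I. c (x i) \<noteq> 0}"
      have Jne: "?J \<noteq> {}" using v cv by blast
      have finJ: "finite ?J" using fin by simp
      obtain i0 where i0: "i0 \<in> ?J" and max: "\<And>j. j \<in> ?J \<Longrightarrow> key (p j) \<le> key (p i0)"
      proof -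
        have "finite ((\<lambda>i. key (p i)) ` ?J)" "(\<lambda>i. key (p i)) ` ?J \<noteq> {}" using finJ Jne by auto
        hence "Max ((\<lambda>i. key (p i)) ` ?J) \<in> (\<lambda>i. key (p i)) ` ?J" by (rule Max_in)
        then obtain i1 where i1b: "Max ((\<lambda>i. key (p i)) ` ?J) = key (p i1)" and i1a: "i1 \<in> ?J" by (erule imageE)
        have mx: "\<And>j. j \<in> ?J \<Longrightarrow> key (p j) \<le> Max ((\<lambda>i. key (p i)) ` ?J)"
          using finJ by (intro Max_ge) auto
        show ?thesis
        proof (rule that[of i1])
          show "i1 \<in> ?J" by (rule i1a)
          fix j assume "j \<in> ?J" thus "key (p j) \<le> key (p i1)" using mx i1b by metis
        qed
      qed
      have "0 = (\<Sum>i\<in>I. qscale (c (x i)) (x i)) (p i0)" using sumI by simp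
      also have "\<dots> = (\<Sum>i\<in>I. c (x i) * x i (p i0))" by (simp add: sum_fun_apply)
      also have "\<dots> = c (x i0) * x i0 (p i0) + (\<Sum>i\<in>I - {i0}. c (x i) * x i (p i0))"
        using fin i0 by (intro sum.remove) auto
      also have "(\<Sum>i\<in>I - {i0}. c (x i) * x i (p i0)) = 0"
      proof (rule sum.neutral, rule ballI)
        fix j assume j: "j \<in> I - {i0}"
        show "c (x j) * x j (p i0) = 0"
        proof (cases "c (x j) = 0")
          case False
          hence "key (p j) \<le> key (p i0)" using max j by auto
          moreover have "key (p j) \<noteq> key (p i0)" using inj j i0 by (auto dest: inj_onD)
          ultimately have "key (p j) < key (p i0)" by simp
          hence "x j (p i0) = 0" using above j by blast
          thus ?thesis by simp
        qed simp
      qed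
      finally have "c (x i0) * x i0 (p i0) = 0" by simp
      thus False using i0 piv[of i0] by simp
    qed
  qed
qed

definition addP :: "(nat \<Rightarrow> nat) \<Rightarrow> nat \<Rightarrow> nat \<Rightarrow> nat \<Rightarrow> nat" where
  "addP e s i = (\<lambda>k. e k + unitv i k + unitv (s - i) k)"

definition sg :: "nat set \<Rightarrow> nat \<Rightarrow> rat" where
  "sg S s = (-1) ^ card {j\<in>S. j < s}"

definition Qm :: "mon \<Rightarrow> nat \<Rightarrow> nat \<Rightarrow> mon" where
  "Qm m s i = (addP (fst m) s i, snd m - {s})"

lemma dcoef_alt:
  "dcoef m m' = (\<Sum>s\<in>snd m. \<Sum>i\<in>{..s}. if m' = Qm m s i then sg (snd m) s else 0)"
  unfolding dcoef_def
proof (rule sum.cong[OF refl])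
  fix s assume "s \<in> snd m"
  show "(if snd m' = snd m - {s} then (- 1) ^ card {j \<in> snd m. j < s} *
          (\<Sum>i\<le>s. if fst m' = (\<lambda>k. fst m k + unitv i k + unitv (s - i) k) then 1 else 0) else 0) =
        (\<Sum>i\<in>{..s}. if m' = Qm m s i then sg (snd m) s else 0)"
  proof (cases "snd m' = snd m - {s}")
    case True
    have EQ: "(m' = Qm m s i) = (fst m' = (\<lambda>k. fst m k + unitv i k + unitv (s - i) k))" for i
      using True unfolding Qm_def addP_def by (cases m') simp
    have "(\<Sum>i\<in>{..s}. if m' = Qm m s i then sg (snd m) s else 0) =
      (\<Sum>i\<in>{..s}. sg (snd m) s * (if fst m' = (\<lambda>k. fst m k + unitv i k + unitv (s - i) k) then 1 else 0))"
      by (rule sum.cong[OF refl]) (simp add: EQ)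
    also have "\<dots> = sg (snd m) s * (\<Sum>i\<in>{..s}. (if fst m' = (\<lambda>k. fst m k + unitv i k + unitv (s - i) k) then 1 else 0))"
      by (rule sum_distrib_left[symmetric])
    finally show ?thesis using True by (simp add: sg_def)
  next
    case False
    have "m' \<noteq> Qm m s i" for i using False unfolding Qm_def by (cases m') simp
    thus ?thesis using False by simp
  qed
qed

lemma dcoef_nz:
  assumes "dcoef m m' \<noteq> 0"
  shows "\<exists>s\<in>snd m. \<exists>i\<le>s. m' = Qm m s i"
proof -
  from assms obtain s where s: "s \<in> snd m"
    and nz: "(\<Sum>i\<in>{..s}. if m' = Qm m s i then sg (snd m) s else 0) \<noteq> 0"
    unfolding dcoef_alt by (rule sum.not_neutral_contains_not_neutral)
  from nz obtain i where i: "i \<in> {..s}" and "(if m' = Qm m s i then sg (snd m) s else 0) \<noteq> 0"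
    by (rule sum.not_neutral_contains_not_neutral)
  hence "m' = Qm m s i" by (cases "m' = Qm m s i") simp_all
  thus ?thesis using s i by auto
qed

lemma sg_nz: "sg S s \<noteq> 0" by (simp add: sg_def)

lemma dcoef_at:
  assumes fin: "finite (snd m)" and s0: "s0 \<in> snd m" and i0: "i0 \<le> s0"
  shows "dcoef m (Qm m s0 i0) \<noteq> 0"
proof -
  let ?m' = "Qm m s0 i0"
  let ?g = "\<lambda>s. \<Sum>i\<in>{..s}. if ?m' = Qm m s i then sg (snd m) s else 0"
  have "dcoef m ?m' = (\<Sum>s\<in>snd m. ?g s)" unfolding dcoef_alt ..
  also have "\<dots> = ?g s0 + (\<Sum>s\<in>snd m - {s0}. ?g s)" using fin s0 by (intro sum.remove)
  also have "(\<Sum>s\<in>snd m - {s0}. ?g s) = 0"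
  proof (rule sum.neutral, rule ballI)
    fix s assume s: "s \<in> snd m - {s0}"
    have "\<forall>i. ?m' \<noteq> Qm m s i"
    proof
      fix i
      have "s0 \<in> snd (Qm m s i)" using s s0 by (auto simp: Qm_def)
      moreover have "s0 \<notin> snd ?m'" by (simp add: Qm_def)
      ultimately show "?m' \<noteq> Qm m s i" by metis
    qed
    thus "?g s = 0" by simp
  qed
  also have "?g s0 = sg (snd m) s0 * (\<Sum>i\<in>{..s0}. if ?m' = Qm m s0 i then 1 else 0)"
    by (simp add: sum_distrib_left if_distrib cong: if_cong)
  finally have eq: "dcoef m ?m' = sg (snd m) s0 * (\<Sum>i\<in>{..s0}. if ?m' = Qm m s0 i then 1 else 0)" by simp
  have "(\<Sum>i\<in>{..s0}. if ?m' = Qm m s0 i then 1 else 0) > (0::rat)"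
    by (rule sum_pos2[of _ i0]) (use i0 in auto)
  thus ?thesis using sg_nz eq by simp
qed

lemma sg_swap_lt:
  assumes fin: "finite S" and s: "s \<in> S" and s': "s' \<in> S" and lt: "s < s'"
  shows "sg S s * sg (S - {s}) s' = - (sg S s' * sg (S - {s'}) s)"
proof -
  let ?A = "card {j\<in>S. j < s}" and ?B = "card {j\<in>S. j < s'}"
  have e1: "{j\<in>S - {s}. j < s'} = {j\<in>S. j < s'} - {s}" by auto
  have "s \<in> {j\<in>S. j < s'}" using s lt by simp
  moreover have "finite {j\<in>S. j < s'}" using fin by simp
  ultimately have c1: "card {j\<in>S - {s}. j < s'} = ?B - 1"
    unfolding e1 by (simp add: card_Diff_singleton)
  have "?B > 0" unfolding card_gt_0_iff using \<open>s \<in> {j\<in>S. j < s'}\<close> \<open>finite {j\<in>S. j < s'}\<close> by blast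
  hence B1: "?B \<ge> 1" by simp
  have e2: "{j\<in>S - {s'}. j < s} = {j\<in>S. j < s}" using lt by auto
  have pw: "(-1::rat) ^ ?B = - ((-1) ^ (?B - 1))"
  proof -
    have "?B = Suc (?B - 1)" using B1 by simp
    hence "(-1::rat) ^ ?B = (-1) ^ Suc (?B - 1)" by (metis)
    thus ?thesis by simp
  qed
  show ?thesis unfolding sg_def c1 e2 pw by simp
qed

lemma sg_swap:
  assumes fin: "finite S" and s: "s \<in> S" and s': "s' \<in> S" and ne: "s \<noteq> s'"
  shows "sg S s * sg (S - {s}) s' = - (sg S s' * sg (S - {s'}) s)"
proof (cases "s < s'")
  case True thus ?thesis using sg_swap_lt[OF fin s s'] by simp
next
  case False
  hence "s' < s" using ne by simp
  from sg_swap_lt[OF fin s' s this] show ?thesis by simp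
qed

lemma sum_antisym_zero:
  fixes f :: "nat \<times> nat \<Rightarrow> rat"
  assumes fin: "finite P" and cl: "\<And>p. p \<in> P \<Longrightarrow> prod.swap p \<in> P"
    and anti: "\<And>p. p \<in> P \<Longrightarrow> f (prod.swap p) = - f p"
  shows "sum f P = 0"
proof -
  have "sum f P = sum (\<lambda>p. f (prod.swap p)) P"
    by (rule sum.reindex_bij_witness[where i=prod.swap and j=prod.swap]) (auto simp: cl)
  also have "\<dots> = sum (\<lambda>p. - f p) P" by (rule sum.cong[OF refl]) (rule anti)
  also have "\<dots> = - sum f P" by (simp add: sum_negf)
  finally show ?thesis by simp
qed

lemma addP_comm: "addP (addP e s i) s' j = addP (addP e s' j) s i"
  unfolding addP_def by (rule ext) simp

lemma Qm_Qm_comm: "Qm (Qm m s i) s' j = Qm (Qm m s' j) s i"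
  unfolding Qm_def by (simp add: addP_comm Diff_insert2[symmetric] insert_commute)

lemma d2_dcoef:
  assumes fin: "finite (snd m)"
  shows "d2 (dcoef m) = (\<lambda>_. 0)"
proof
  fix m''
  let ?S = "snd m"
  let ?T = "(\<lambda>p. Qm m (fst p) (snd p)) ` (SIGMA s:?S. {..s})"
  have finT: "finite ?T" using fin by simp
  have supp: "{m'. dcoef m m' \<noteq> 0} \<subseteq> ?T"
  proof
    fix m' assume "m' \<in> {m'. dcoef m m' \<noteq> 0}"
    then obtain s i where "s \<in> ?S" "i \<le> s" "m' = Qm m s i" using dcoef_nz by blast
    thus "m' \<in> ?T" by force
  qed
  let ?D = "\<lambda>m'. dcoef m' m''"
  have "d2 (dcoef m) m'' = (\<Sum>m'\<in>?T. dcoef m m' * ?D m')"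
    using d2_eq[OF finT supp] by simp
  also have "\<dots> = (\<Sum>m'\<in>?T. \<Sum>s\<in>?S. \<Sum>i\<in>{..s}. if m' = Qm m s i then sg ?S s * ?D m' else 0)"
  proof (rule sum.cong[OF refl])
    fix m' assume "m' \<in> ?T"
    show "dcoef m m' * ?D m' = (\<Sum>s\<in>?S. \<Sum>i\<in>{..s}. if m' = Qm m s i then sg ?S s * ?D m' else 0)"
      unfolding dcoef_alt[of m] sum_distrib_right by (rule sum.cong[OF refl], rule sum.cong[OF refl]) simp
  qed
  also have "\<dots> = (\<Sum>s\<in>?S. \<Sum>i\<in>{..s}. \<Sum>m'\<in>?T. if m' = Qm m s i then sg ?S s * ?D m' else 0)"
    by (simp add: sum.swap[of _ ?T] sum.swap[of _ ?T "{.._}"])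
  also have "\<dots> = (\<Sum>s\<in>?S. \<Sum>i\<in>{..s}. sg ?S s * ?D (Qm m s i))"
  proof (rule sum.cong[OF refl], rule sum.cong[OF refl])
    fix s i assume "s \<in> ?S" "i \<in> {..s}"
    hence "Qm m s i \<in> ?T" by force
    thus "(\<Sum>m'\<in>?T. if m' = Qm m s i then sg ?S s * ?D m' else 0) = sg ?S s * ?D (Qm m s i)"
      by (simp add: sum.delta[OF finT])
  qed
  also have "\<dots> = (\<Sum>s\<in>?S. \<Sum>i\<in>{..s}. \<Sum>s'\<in>?S - {s}. \<Sum>j\<in>{..s'}.
       sg ?S s * (if m'' = Qm (Qm m s i) s' j then sg (?S - {s}) s' else 0))"
  proof (rule sum.cong[OF refl], rule sum.cong[OF refl])
    fix s i
    have eq: "snd (Qm m s i) = ?S - {s}" by (simp add: Qm_def)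
    show "sg ?S s * ?D (Qm m s i) = (\<Sum>s'\<in>?S - {s}. \<Sum>j\<in>{..s'}.
       sg ?S s * (if m'' = Qm (Qm m s i) s' j then sg (?S - {s}) s' else 0))"
      unfolding dcoef_alt[of "Qm m s i"] eq sum_distrib_left by (rule refl)
  qed
  also have "\<dots> = (\<Sum>s\<in>?S. \<Sum>s'\<in>?S - {s}. \<Sum>i\<in>{..s}. \<Sum>j\<in>{..s'}.
       sg ?S s * (if m'' = Qm (Qm m s i) s' j then sg (?S - {s}) s' else 0))"
    by (rule sum.cong[OF refl], rule sum.swap)
  also have "\<dots> = (\<Sum>p\<in>(SIGMA s:?S. ?S - {s}). \<Sum>i\<in>{..fst p}. \<Sum>j\<in>{..snd p}.
       sg ?S (fst p) * (if m'' = Qm (Qm m (fst p) i) (snd p) j then sg (?S - {fst p}) (snd p) else 0))"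
  proof -
    define G where "G s s' = (\<Sum>i\<in>{..s}. \<Sum>j\<in>{..s'}.
       sg ?S s * (if m'' = Qm (Qm m s i) s' j then sg (?S - {s}) s' else 0))" for s s'
    have "(\<Sum>s\<in>?S. \<Sum>s'\<in>?S - {s}. G s s') = (\<Sum>(s,s')\<in>(SIGMA s:?S. ?S - {s}). G s s')"
      using fin by (intro sum.Sigma) auto
    thus ?thesis unfolding G_def split_def .
  qed
  also have "\<dots> = 0"
  proof (rule sum_antisym_zero)
    show "finite (SIGMA s:?S. ?S - {s})" using fin by simp
  next
    fix p assume "p \<in> (SIGMA s:?S. ?S - {s})"
    thus "prod.swap p \<in> (SIGMA s:?S. ?S - {s})" by (cases p) auto
  next
    fix p assume p: "p \<in> (SIGMA s:?S. ?S - {s})"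
    obtain s s' where ss: "p = (s, s')" by (cases p)
    have s: "s \<in> ?S" and s': "s' \<in> ?S" and ne: "s \<noteq> s'" using p ss by auto
    have "(\<Sum>i\<in>{..s'}. \<Sum>j\<in>{..s}. sg ?S s' * (if m'' = Qm (Qm m s' i) s j then sg (?S - {s'}) s else 0))
        = (\<Sum>j\<in>{..s}. \<Sum>i\<in>{..s'}. sg ?S s' * (if m'' = Qm (Qm m s' i) s j then sg (?S - {s'}) s else 0))"
      by (rule sum.swap)
    also have "\<dots> = (\<Sum>j\<in>{..s}. \<Sum>i\<in>{..s'}. - (sg ?S s * (if m'' = Qm (Qm m s j) s' i then sg (?S - {s}) s' else 0)))"
    proof (rule sum.cong[OF refl], rule sum.cong[OF refl])
      fix j i
      have sw: "sg ?S s' * sg (?S - {s'}) s = - (sg ?S s * sg (?S - {s}) s')"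
        using sg_swap[OF fin s s' ne] by simp
      show "sg ?S s' * (if m'' = Qm (Qm m s' i) s j then sg (?S - {s'}) s else 0) =
            - (sg ?S s * (if m'' = Qm (Qm m s j) s' i then sg (?S - {s}) s' else 0))"
        using sw by (simp add: Qm_Qm_comm[of m s' i s j])
    qed
    also have "\<dots> = - (\<Sum>j\<in>{..s}. \<Sum>i\<in>{..s'}. sg ?S s * (if m'' = Qm (Qm m s j) s' i then sg (?S - {s}) s' else 0))"
      by (simp add: sum_negf)
    finally have X: "(\<Sum>i\<in>{..s'}. \<Sum>j\<in>{..s}. sg ?S s' * (if m'' = Qm (Qm m s' i) s j then sg (?S - {s'}) s else 0))
      = - (\<Sum>j\<in>{..s}. \<Sum>i\<in>{..s'}. sg ?S s * (if m'' = Qm (Qm m s j) s' i then sg (?S - {s}) s' else 0))" .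
    show "(\<Sum>i\<in>{..fst (prod.swap p)}. \<Sum>j\<in>{..snd (prod.swap p)}.
       sg ?S (fst (prod.swap p)) * (if m'' = Qm (Qm m (fst (prod.swap p)) i) (snd (prod.swap p)) j then sg (?S - {fst (prod.swap p)}) (snd (prod.swap p)) else 0))
      = - (\<Sum>i\<in>{..fst p}. \<Sum>j\<in>{..snd p}.
       sg ?S (fst p) * (if m'' = Qm (Qm m (fst p) i) (snd p) j then sg (?S - {fst p}) (snd p) else 0))"
      unfolding ss prod.swap_def fst_conv snd_conv by (rule X)
  qed
  finally show "d2 (dcoef m) m'' = 0" .
qed

lemma d2_delta: "d2 (delta m) = dcoef m"
proof -
  have "d2 (delta m) = (\<lambda>m'. \<Sum>x\<in>{m}. delta m x * dcoef x m')"
    by (rule d2_eq) (auto simp: delta_def)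
  thus ?thesis by (simp add: delta_def fun_eq_iff)
qed

definition E :: "nat \<Rightarrow> nat \<Rightarrow> nat \<Rightarrow> nat \<Rightarrow> nat" where
  "E a b c = (\<lambda>k. if k = 0 then a else if k = 1 then b else if k = 2 then c else 0)"

lemma E_apply[simp]: "E a b c 0 = a" "E a b c (Suc 0) = b" "E a b c 2 = c"
  by (simp_all add: E_def)

lemma E_eq[simp]: "(E a b c = E a' b' c') \<longleftrightarrow> (a = a' \<and> b = b' \<and> c = c')"
proof
  assume h: "E a b c = E a' b' c'"
  have "E a b c 0 = E a' b' c' 0" "E a b c (Suc 0) = E a' b' c' (Suc 0)" "E a b c 2 = E a' b' c' 2"
    using h by simp_all
  thus "a = a' \<and> b = b' \<and> c = c'" by simp
qed simp

definition Mon3 :: "mon set" where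
  "Mon3 = {m. (\<forall>k. 3 \<le> k \<longrightarrow> fst m k = 0) \<and> snd m \<subseteq> {..<3}}"

lemma Mon3_E:
  assumes "m \<in> Mon3"
  shows "m = (E (fst m 0) (fst m (Suc 0)) (fst m 2), snd m)"
proof -
  have "fst m = E (fst m 0) (fst m (Suc 0)) (fst m 2)"
  proof
    fix k
    show "fst m k = E (fst m 0) (fst m (Suc 0)) (fst m 2) k"
      using assms unfolding Mon3_def E_def
      by (cases "k = 0"; cases "k = 1"; cases "k = 2") auto
  qed
  thus ?thesis by (metis prod.collapse)
qed

lemma Mon3_cases:
  assumes "m \<in> Mon3"
  obtains a b c S where "m = (E a b c, S)" "S \<subseteq> {..<3}"
  using Mon3_E[OF assms] assms unfolding Mon3_def by auto

lemma E_Mon3[simp]: "((E a b c, S) \<in> Mon3) = (S \<subseteq> {..<3})"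
  unfolding Mon3_def E_def by auto

lemma sub3_cases:
  assumes "S \<subseteq> {..<(3::nat)}"
  shows "S = {} \<or> S = {0} \<or> S = {1} \<or> S = {2} \<or> S = {0,1} \<or> S = {0,2} \<or> S = {1,2} \<or> S = {0,1,2}"
proof -
  have "S = (if 0 \<in> S then {0} else {}) \<union> (if 1 \<in> S then {1} else {}) \<union> (if 2 \<in> S then {2} else {})"
  proof (rule set_eqI)
    fix k
    show "(k \<in> S) = (k \<in> (if 0 \<in> S then {0} else {}) \<union> (if 1 \<in> S then {1} else {}) \<union> (if 2 \<in> S then {2} else {}))"
    proof
      assume k: "k \<in> S"
      hence "k < 3" using assms by auto
      hence "k = 0 \<or> k = 1 \<or> k = 2" by auto
      thus "k \<in> (if 0 \<in> S then {0} else {}) \<union> (if 1 \<in> S then {1} else {}) \<union> (if 2 \<in> S then {2} else {})"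
        using k by auto
    qed (auto split: if_splits)
  qed
  thus ?thesis by (auto split: if_splits)
qed

lemma addP_E:
  "addP (E a b c) 0 0 = E (a+2) b c"
  "addP (E a b c) 1 0 = E (a+1) (b+1) c"
  "addP (E a b c) 1 1 = E (a+1) (b+1) c"
  "addP (E a b c) 2 0 = E (a+1) b (c+1)"
  "addP (E a b c) 2 1 = E a (b+2) c"
  "addP (E a b c) 2 2 = E (a+1) b (c+1)"
  by (auto simp: addP_def E_def unitv_def fun_eq_iff)

lemma addP_E':
  "addP (E a b c) (Suc 0) 0 = E (a+1) (b+1) c"
  "addP (E a b c) (Suc 0) (Suc 0) = E (a+1) (b+1) c"
  "addP (E a b c) 2 (Suc 0) = E a (b+2) c"
  by (auto simp: addP_def E_def unitv_def fun_eq_iff)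

lemma qdeg_E: "qdeg (E a b c, S) = 2*a + 4*b + 6*c + (\<Sum>k\<in>S. 2*k+4)"
proof -
  have "(\<Sum>k\<in>{k. E a b c k \<noteq> 0}. E a b c k * (2*k+2)) = (\<Sum>k\<in>{0,1,2}. E a b c k * (2*k+2))"
    by (rule sum.mono_neutral_left) (auto simp: E_def split: if_splits)
  thus ?thesis unfolding qdeg_def by simp
qed

lemma tdeg_E: "tdeg (E a b c, S) = 2*b + 4*c + (\<Sum>k\<in>S. 2*k+1)"
proof -
  have "(\<Sum>k\<in>{k. E a b c k \<noteq> 0}. E a b c k * (2*k)) = (\<Sum>k\<in>{0,1,2}. E a b c k * (2*k))"
    by (rule sum.mono_neutral_left) (auto simp: E_def split: if_splits)
  thus ?thesis unfolding tdeg_def by simp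
qed

lemma Qm_E: "Qm (E a b c, S) s i = (addP (E a b c) s i, S - {s})"
  by (simp add: Qm_def)

lemma Qm_deg:
  assumes m: "m \<in> Mon3" and s: "s \<in> snd m" and i: "i \<le> s"
  shows "Qm m s i \<in> Mon3 \<and> qdeg (Qm m s i) = qdeg m \<and> Suc (tdeg (Qm m s i)) = tdeg m"
proof -
  obtain a b c S where mE: "m = (E a b c, S)" and S: "S \<subseteq> {..<3}" using m by (rule Mon3_cases)
  have fin: "finite S" using S finite_subset by blast
  have sS: "s \<in> S" using s mE by simp
  have s3: "s = 0 \<or> s = 1 \<or> s = 2" using sS S by auto
  have qS: "(\<Sum>k\<in>S. 2*k+4) = (2*s+4) + (\<Sum>k\<in>S-{s}. 2*k+4)" using fin sS by (rule sum.remove)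
  have tS: "(\<Sum>k\<in>S. 2*k+1) = (2*s+1) + (\<Sum>k\<in>S-{s}. 2*k+1)" using fin sS by (rule sum.remove)
  have M: "(E x y z, S - {s}) \<in> Mon3" for x y z using S by auto
  have "(s = 0 \<and> i = 0) \<or> (s = 1 \<and> i = 0) \<or> (s = 1 \<and> i = 1) \<or> (s = 2 \<and> i = 0) \<or> (s = 2 \<and> i = 1) \<or> (s = 2 \<and> i = 2)"
    using s3 i by auto
  thus ?thesis
    unfolding mE Qm_E using M qS tS by (elim disjE) (simp_all add: addP_E addP_E' qdeg_E tdeg_E)
qed

definition f1 :: "mon \<Rightarrow> nat" where
  "f1 m = (if card (snd m) = 1 \<and> fst m 1 \<ge> 1 then 1 else 0)"

definition f2 :: "mon \<Rightarrow> nat" where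
  "f2 m = (if card (snd m) = 1 then (if 1 \<in> snd m then 2 else if 0 \<in> snd m then 1 else 0)
           else if card (snd m) = 2 then (if 2 \<notin> snd m then 2 else if 0 \<in> snd m then 1 else 0)
           else 0)"

definition key :: "mon \<Rightarrow> nat \<times> nat \<times> nat \<times> nat \<times> nat \<times> nat" where
  "key m = (card (snd m), f1 m, f2 m, fst m 1, fst m 0, fst m 2)"

definition decode :: "nat \<Rightarrow> nat \<Rightarrow> nat set" where
  "decode n f = (if n = 0 then {} else if n = 1 then (if f = 2 then {1} else if f = 1 then {0} else {2})
     else if n = 2 then (if f = 2 then {0,1} else if f = 1 then {0,2} else {1,2}) else {0,1,2})"

lemma decode_key: "snd m \<subseteq> {..<3} \<Longrightarrow> decode (card (snd m)) (f2 m) = snd m"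
proof -
  assume "snd m \<subseteq> {..<3}"
  from sub3_cases[OF this] show ?thesis by (elim disjE) (simp_all add: decode_def f2_def)
qed

lemma key_inj: "inj_on key Mon3"
proof (rule inj_onI)
  fix m m' assume m: "m \<in> Mon3" and m': "m' \<in> Mon3" and k: "key m = key m'"
  have c: "card (snd m) = card (snd m')" and f: "f2 m = f2 m'" using k unfolding key_def by simp_all
  have s1: "snd m \<subseteq> {..<3}" "snd m' \<subseteq> {..<3}" using m m' unfolding Mon3_def by simp_all
  have "snd m = decode (card (snd m)) (f2 m)" using decode_key[OF s1(1)] by simp
  also have "\<dots> = decode (card (snd m')) (f2 m')" using c f by simp
  also have "\<dots> = snd m'" using decode_key[OF s1(2)] by simp
  finally have sn: "snd m = snd m'" .
  have "fst m 0 = fst m' 0" "fst m (Suc 0) = fst m' (Suc 0)" "fst m 2 = fst m' 2"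
    using k unfolding key_def by simp_all
  hence "(E (fst m 0) (fst m (Suc 0)) (fst m 2), snd m) = (E (fst m' 0) (fst m' (Suc 0)) (fst m' 2), snd m')"
    using sn by simp
  thus "m = m'" using Mon3_E[OF m] Mon3_E[OF m'] by simp
qed

definition bits :: "nat set \<Rightarrow> nat" where
  "bits S = (if 0 \<in> S then 1 else 0) + (if 1 \<in> S then 2 else 0) + (if 2 \<in> S then 4 else 0)"

definition inM :: "mon \<Rightarrow> bool" where
  "inM m \<longleftrightarrow> bits (snd m) \<ge> 4 \<or> ((bits (snd m) = 1 \<or> bits (snd m) = 2) \<and> fst m 1 = 0)
     \<or> (bits (snd m) = 3 \<and> fst m 1 \<le> 1)"

definition ps :: "mon \<Rightarrow> nat \<times> nat" where
  "ps m = (if bits (snd m) = 1 then (0,0) else if bits (snd m) = 2 then (1,0)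
     else if bits (snd m) = 3 \<and> fst m 1 = 1 then (0,0) else if bits (snd m) = 3 then (1,0) else (2,1))"

definition phi :: "mon \<Rightarrow> mon" where
  "phi m = Qm m (fst (ps m)) (snd (ps m))"

definition inH :: "mon \<Rightarrow> bool" where
  "inH m \<longleftrightarrow> (bits (snd m) = 0 \<and> fst m 1 = 0 \<and> fst m 0 \<le> 1) \<or> (bits (snd m) = 0 \<and> fst m 0 = 0 \<and> fst m 1 = 1)
     \<or> (bits (snd m) = 1 \<and> fst m 0 = 0 \<and> fst m 1 = 1) \<or> (bits (snd m) = 2 \<and> fst m 0 \<le> 1 \<and> fst m 1 = 1)"

definition psi :: "mon \<Rightarrow> mon" where
  "psi m = (let a = fst m 0; b = fst m 1; c = fst m 2; B = bits (snd m) in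
     if B = 0 then (if b \<ge> 2 then (E a (b-2) c, {2}) else if b = 1 then (E (a-1) 0 c, {1}) else (E (a-2) 0 c, {0}))
     else if B = 1 then (if b \<ge> 2 then (E a (b-2) c, {0,2}) else (E (a-1) 0 c, {0,1}))
     else if B = 2 then (if b \<ge> 2 then (E a (b-2) c, {1,2}) else (E (a-2) 1 c, {0,1}))
     else (E a (b-2) c, {0,1,2}))"

lemma atMost_012: "{..0::nat} = {0}" "{..Suc 0} = {0, Suc 0}" "{..2::nat} = {0, Suc 0, 2}"
  by auto

lemma ps_ok:
  assumes "S \<subseteq> {..<3}" "inM (E a b c, S)"
  shows "fst (ps (E a b c, S)) \<in> S \<and> snd (ps (E a b c, S)) \<le> fst (ps (E a b c, S))"
  using sub3_cases[OF assms(1)] assms(2) by (elim disjE) (simp_all add: inM_def ps_def bits_def)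

lemma piv_M_all:
  assumes "S \<subseteq> {..<3}" "inM (E a b c, S)"
  shows "\<forall>s\<in>S. \<forall>i\<in>{..s}. Qm (E a b c, S) s i = phi (E a b c, S) \<or> key (Qm (E a b c, S) s i) < key (phi (E a b c, S))"
  using sub3_cases[OF assms(1)] assms(2)
  by (elim disjE) (simp_all add: atMost_012 Qm_E phi_def ps_def addP_E addP_E' key_def f1_def f2_def bits_def inM_def)

lemmas cls_simps = atMost_012 Qm_E phi_def ps_def addP_E addP_E' key_def f1_def f2_def bits_def inM_def inH_def psi_def Let_def

lemma phi_class:
  assumes "S \<subseteq> {..<3}" "inM (E a b c, S)"
  shows "\<not> inM (phi (E a b c, S)) \<and> \<not> inH (phi (E a b c, S)) \<and> psi (phi (E a b c, S)) = (E a b c, S)"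
  using sub3_cases[OF assms(1)] assms(2)
  by (elim disjE) (simp_all add: cls_simps)

lemma M_notH:
  assumes "S \<subseteq> {..<3}" "inM (E a b c, S)"
  shows "\<not> inH (E a b c, S)"
  using sub3_cases[OF assms(1)] assms(2)
  by (elim disjE) (simp_all add: cls_simps)

lemma psi_class:
  assumes "S \<subseteq> {..<3}" "\<not> inM (E a b c, S)" "\<not> inH (E a b c, S)"
  shows "inM (psi (E a b c, S)) \<and> phi (psi (E a b c, S)) = (E a b c, S) \<and> psi (E a b c, S) \<in> Mon3"
  using sub3_cases[OF assms(1)] assms(2,3)
  by (elim disjE) (auto simp: cls_simps)

definition hB :: "mon \<Rightarrow> mon" where "hB p = (E 1 0 (fst p 2), {1})"
definition hC :: "mon \<Rightarrow> mon" where "hC p = (E (fst p 0 + 1) 0 (fst p 2), {2})"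
definition hF :: "mon \<Rightarrow> mon" where "hF p = (E (fst p 0) 0 (fst p 2 + 1), {0})"

definition hvec :: "mon \<Rightarrow> mon \<Rightarrow> rat" where
  "hvec p = (if bits (snd p) = 1 then (\<lambda>m. (if m = p then 2 else 0) + (if m = hB p then -1 else 0))
     else if bits (snd p) = 2 then (\<lambda>m. (if m = hC p then -2 else 0) + (if m = p then 1 else 0) + (if m = hF p then 4 else 0))
     else (\<lambda>m. if m = p then 1 else 0))"

definition hsupp :: "mon \<Rightarrow> mon set" where
  "hsupp p = (if bits (snd p) = 1 then {p, hB p} else if bits (snd p) = 2 then {hC p, p, hF p} else {p})"

lemma hsupp_fin: "finite (hsupp p)" by (simp add: hsupp_def)

lemma hvec_supp: "{m. hvec p m \<noteq> 0} \<subseteq> hsupp p"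
  by (auto simp: hvec_def hsupp_def split: if_splits)

lemma sg_single: "sg {s} s = 1"
proof -
  have "{j\<in>{s}. j < s} = {}" by auto
  hence "card {j\<in>{s}. j < s} = 0" by (simp only: card.empty)
  thus ?thesis unfolding sg_def by (simp only: power_0)
qed

lemma dcoef_s0: "dcoef (E a b c, {0}) m' = (if m' = (E (a+2) b c, {}) then 1 else 0)"
  unfolding dcoef_alt by (simp add: atMost_012 Qm_E addP_E sg_single)

lemma dcoef_s1: "dcoef (E a b c, {1}) m' = (if m' = (E (a+1) (b+1) c, {}) then 2 else 0)"
  unfolding dcoef_alt by (simp add: atMost_012 Qm_E addP_E addP_E' sg_single)

lemma dcoef_s1': "dcoef (E a b c, {Suc 0}) m' = (if m' = (E (a+1) (b+1) c, {}) then 2 else 0)"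
  using dcoef_s1 by simp

lemma dcoef_empty: "dcoef (x, {}) m' = 0" by (simp add: dcoef_def)

lemma dcoef_s2: "dcoef (E a b c, {2}) m' = (if m' = (E (a+1) b (c+1), {}) then 2 else 0) + (if m' = (E a (b+2) c, {}) then 1 else 0)"
  unfolding dcoef_alt by (simp add: atMost_012 Qm_E addP_E addP_E' sg_single)

lemma hvec_cycle:
  assumes "S \<subseteq> {..<3}" "inH (E a b c, S)"
  shows "d2 (hvec (E a b c, S)) = (\<lambda>_. 0)"
proof -
  let ?p = "(E a b c, S)"
  have d: "d2 (hvec ?p) = (\<lambda>m'. \<Sum>m\<in>hsupp ?p. hvec ?p m * dcoef m m')"
    by (rule d2_eq[OF hsupp_fin hvec_supp])
  show ?thesis unfolding d
  proof
    fix m'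
    show "(\<Sum>m\<in>hsupp ?p. hvec ?p m * dcoef m m') = 0"
      using sub3_cases[OF assms(1)] assms(2)
      by (elim disjE) (simp_all add: cls_simps hvec_def hsupp_def hB_def hC_def hF_def dcoef_s0 dcoef_s1 dcoef_s1' dcoef_s2 dcoef_empty)
  qed
qed

lemma hvec_piv0:
  assumes "S \<subseteq> {..<3}" "inH (E a b c, S)"
  shows "hvec (E a b c, S) (E a b c, S) \<noteq> 0 \<and> (\<forall>m'\<in>hsupp (E a b c, S). m' = (E a b c, S) \<or> key m' < key (E a b c, S))"
  using sub3_cases[OF assms(1)] assms(2)
  by (elim disjE) (simp_all add: cls_simps hvec_def hsupp_def hB_def hC_def hF_def)

lemma hsupp_deg:
  assumes "S \<subseteq> {..<3}" "inH (E a b c, S)"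
  shows "\<forall>m'\<in>hsupp (E a b c, S). m' \<in> Mon3 \<and> qdeg m' = qdeg (E a b c, S) \<and> tdeg m' = tdeg (E a b c, S)"
  using sub3_cases[OF assms(1)] assms(2)
  by (elim disjE) (simp_all add: cls_simps hsupp_def hB_def hC_def hF_def qdeg_E tdeg_E)

lemma mons3: "mons 3 q t = {m\<in>Mon3. qdeg m = q \<and> tdeg m = t}"
  unfolding mons_def Mon3_def by auto

lemma M_props:
  assumes m: "m \<in> Mon3" and M: "inM m"
  shows "phi m \<in> Mon3 \<and> qdeg (phi m) = qdeg m \<and> Suc (tdeg (phi m)) = tdeg m"
    and "dcoef m (phi m) \<noteq> 0"
    and "\<And>m'. key (phi m) < key m' \<Longrightarrow> dcoef m m' = 0"
    and "\<And>m'. dcoef m m' \<noteq> 0 \<Longrightarrow> m' \<in> Mon3 \<and> qdeg m' = qdeg m \<and> Suc (tdeg m') = tdeg m"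
    and "\<not> inM (phi m) \<and> \<not> inH (phi m) \<and> psi (phi m) = m"
    and "\<not> inH m"
proof -
  obtain a b c S where mE: "m = (E a b c, S)" and S: "S \<subseteq> {..<3}" using m by (rule Mon3_cases)
  have fin: "finite (snd m)" using S mE finite_subset by auto
  have pk: "fst (ps m) \<in> snd m" "snd (ps m) \<le> fst (ps m)" using ps_ok[OF S] M mE by simp_all
  have phiQ: "phi m = Qm m (fst (ps m)) (snd (ps m))" by (simp add: phi_def)
  show "phi m \<in> Mon3 \<and> qdeg (phi m) = qdeg m \<and> Suc (tdeg (phi m)) = tdeg m"
    unfolding phiQ by (rule Qm_deg[OF m pk])
  show "dcoef m (phi m) \<noteq> 0" unfolding phiQ by (rule dcoef_at[OF fin pk])
  have pall: "\<forall>s\<in>snd m. \<forall>i\<in>{..s}. Qm m s i = phi m \<or> key (Qm m s i) < key (phi m)"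
    using piv_M_all[OF S] M mE by simp
  show "dcoef m m' = 0" if k: "key (phi m) < key m'" for m'
  proof (rule ccontr)
    assume "dcoef m m' \<noteq> 0"
    then obtain s i where si: "s \<in> snd m" "i \<le> s" "m' = Qm m s i" using dcoef_nz by blast
    hence "m' = phi m \<or> key m' < key (phi m)" using pall by auto
    thus False using k by auto
  qed
  show "m' \<in> Mon3 \<and> qdeg m' = qdeg m \<and> Suc (tdeg m') = tdeg m" if nz: "dcoef m m' \<noteq> 0" for m'
  proof -
    obtain s i where si: "s \<in> snd m" "i \<le> s" "m' = Qm m s i" using dcoef_nz[OF nz] by blast
    thus ?thesis using Qm_deg[OF m si(1,2)] by simp
  qed
  show "\<not> inM (phi m) \<and> \<not> inH (phi m) \<and> psi (phi m) = m"
    using phi_class[OF S] M mE by simp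
  show "\<not> inH m" using M_notH[OF S] M mE by simp
qed

lemma nonM_props:
  assumes m: "m \<in> Mon3" and "\<not> inM m" "\<not> inH m"
  shows "psi m \<in> Mon3 \<and> inM (psi m) \<and> phi (psi m) = m"
proof -
  obtain a b c S where mE: "m = (E a b c, S)" and S: "S \<subseteq> {..<3}" using m by (rule Mon3_cases)
  show ?thesis using psi_class[OF S] assms mE by simp
qed

lemma H_props:
  assumes m: "p \<in> Mon3" and H: "inH p"
  shows "d2 (hvec p) = (\<lambda>_. 0)" and "hvec p p \<noteq> 0"
    and "\<And>m'. key p < key m' \<Longrightarrow> hvec p m' = 0"
    and "\<And>m'. hvec p m' \<noteq> 0 \<Longrightarrow> m' \<in> Mon3 \<and> qdeg m' = qdeg p \<and> tdeg m' = tdeg p"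
proof -
  obtain a b c S where mE: "p = (E a b c, S)" and S: "S \<subseteq> {..<3}" using m by (rule Mon3_cases)
  show "d2 (hvec p) = (\<lambda>_. 0)" using hvec_cycle[OF S] H mE by simp
  have pv: "hvec p p \<noteq> 0 \<and> (\<forall>m'\<in>hsupp p. m' = p \<or> key m' < key p)"
    using hvec_piv0[OF S] H mE by simp
  thus "hvec p p \<noteq> 0" by simp
  show "hvec p m' = 0" if k: "key p < key m'" for m'
  proof (rule ccontr)
    assume "hvec p m' \<noteq> 0"
    hence "m' \<in> hsupp p" using hvec_supp by blast
    hence "m' = p \<or> key m' < key p" using pv by blast
    thus False using k by auto
  qed
  have hd: "\<forall>m'\<in>hsupp p. m' \<in> Mon3 \<and> qdeg m' = qdeg p \<and> tdeg m' = tdeg p"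
    using hsupp_deg[OF S] H mE by simp
  show "m' \<in> Mon3 \<and> qdeg m' = qdeg p \<and> tdeg m' = tdeg p" if "hvec p m' \<noteq> 0" for m'
    using that hvec_supp hd by blast
qed

lemma Apiece_span:
  fixes F :: "mon set"
  assumes F: "finite F"
  shows "{f::mon\<Rightarrow>rat. \<forall>m. f m \<noteq> 0 \<longrightarrow> m \<in> F} \<subseteq> V.span (delta ` F)"
proof
  fix f :: "mon \<Rightarrow> rat" assume "f \<in> {f. \<forall>m. f m \<noteq> 0 \<longrightarrow> m \<in> F}"
  hence "f = (\<Sum>m\<in>F. qscale (f m) (delta m))" using F by (intro expand_delta) auto
  also have "\<dots> \<in> V.span (delta ` F)"
    by (intro V.span_sum V.span_scale V.span_base) auto
  finally show "f \<in> V.span (delta ` F)" .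
qed

lemma R_span:
  fixes F :: "mon set"
  assumes F: "finite F"
  shows "d2 ` {f::mon\<Rightarrow>rat. \<forall>m. f m \<noteq> 0 \<longrightarrow> m \<in> F} \<subseteq> V.span (LF F ` delta ` F)"
proof
  fix y assume "y \<in> d2 ` {f. \<forall>m. f m \<noteq> 0 \<longrightarrow> m \<in> F}"
  then obtain f where f: "\<forall>m. f m \<noteq> 0 \<longrightarrow> m \<in> F" "y = d2 f" by auto
  have e: "f = (\<Sum>m\<in>F. qscale (f m) (delta m))" using F f(1) by (intro expand_delta) auto
  have "y = LF F f" unfolding f(2) LF_def using F f(1) by (intro d2_eq) auto
  also have "\<dots> = LF F (\<Sum>m\<in>F. qscale (f m) (delta m))" using e by simp
  also have "\<dots> = (\<Sum>m\<in>F. qscale (f m) (LF F (delta m)))" by (rule LF_sum)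
  also have "\<dots> \<in> V.span (LF F ` delta ` F)"
    by (intro V.span_sum V.span_scale V.span_base) auto
  finally show "y \<in> V.span (LF F ` delta ` F)" .
qed

lemma indep_le_dim:
  assumes B: "V.independent B" and BW: "B \<subseteq> W" and WF: "W \<subseteq> V.span F" and F: "finite F"
  shows "card B \<le> V.dim W"
proof -
  obtain Bw where Bw: "Bw \<subseteq> W" "V.independent Bw" "W \<subseteq> V.span Bw" "card Bw = V.dim W"
    by (rule V.basis_exists)
  have "Bw \<subseteq> V.span F" using Bw(1) WF by blast
  hence finBw: "finite Bw" using V.independent_span_bound[OF F Bw(2)] by simp
  have "B \<subseteq> V.span Bw" using BW Bw(3) by blast
  hence "card B \<le> card Bw" using V.independent_span_bound[OF finBw B] by simp
  thus ?thesis using Bw(4) by simp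
qed

lemma fin_mons: "finite (mons 3 q t)"
proof -
  have "mons 3 q t \<subseteq> (\<lambda>(x,y,z,S). (E x y z, S)) ` ({..q} \<times> {..q} \<times> {..q} \<times> Pow {..<3})"
  proof
    fix m assume "m \<in> mons 3 q t"
    hence m: "m \<in> Mon3" "qdeg m = q" unfolding mons3 by auto
    obtain a b c S where mE: "m = (E a b c, S)" and S: "S \<subseteq> {..<3}" using m(1) by (rule Mon3_cases)
    have "a \<le> q" "b \<le> q" "c \<le> q" using m(2) unfolding mE qdeg_E by auto
    thus "m \<in> (\<lambda>(x,y,z,S). (E x y z, S)) ` ({..q} \<times> {..q} \<times> {..q} \<times> Pow {..<3})"
      using mE S by force
  qed
  thus ?thesis by (rule finite_subset) simp
qed

definition MM :: "nat \<Rightarrow> nat \<Rightarrow> mon set" where "MM q t = {m\<in>mons 3 q t. inM m}"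
definition HH :: "nat \<Rightarrow> nat \<Rightarrow> mon set" where "HH q t = {m\<in>mons 3 q t. inH m}"

lemma MM_fin: "finite (MM q t)" unfolding MM_def using fin_mons by simp
lemma HH_fin: "finite (HH q t)" unfolding HH_def using fin_mons by simp

lemma Apiece3: "Apiece 3 q t = {f. \<forall>m. f m \<noteq> 0 \<longrightarrow> m \<in> mons 3 q t}"
  unfolding Apiece_def by simp

lemma phi_inj: "inj_on phi (MM q t)"
proof (rule inj_onI)
  fix m m' assume "m \<in> MM q t" "m' \<in> MM q t" "phi m = phi m'"
  hence "m \<in> Mon3" "inM m" "m' \<in> Mon3" "inM m'" "phi m = phi m'" unfolding MM_def mons3 by auto
  thus "m = m'" using M_props(5) by metis
qed

lemma R_lower: "card (MM q t) \<le> V.dim (d2 ` Apiece 3 q t)"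
proof -
  let ?I = "MM q t"
  have I3: "m \<in> Mon3" "inM m" "qdeg m = q" "tdeg m = t" if "m \<in> ?I" for m
    using that unfolding MM_def mons3 by auto
  have inj: "inj_on (\<lambda>m. key (phi m)) ?I"
  proof (rule inj_onI)
    fix m m' assume mm: "m \<in> ?I" "m' \<in> ?I" "key (phi m) = key (phi m')"
    have "phi m \<in> Mon3" "phi m' \<in> Mon3" using M_props(1) I3 mm by auto
    hence "phi m = phi m'" using key_inj mm(3) by (meson inj_onD)
    thus "m = m'" using phi_inj mm by (meson inj_onD)
  qed
  have piv: "dcoef m (phi m) \<noteq> 0" if "m \<in> ?I" for m using M_props(2) I3[OF that] by blast
  have above: "dcoef m m' = 0" if "m \<in> ?I" "key (phi m) < key m'" for m m'
    using M_props(3) I3[OF that(1)] that(2) by blast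
  have pi1: "inj_on dcoef ?I" by (rule pivot_indep(1)[where I="MM q t" and key=key and p=phi and x=dcoef, OF MM_fin inj]) (simp_all add: piv above)
  have pi2: "V.independent (dcoef ` ?I)" by (rule pivot_indep(2)[where I="MM q t" and key=key and p=phi and x=dcoef, OF MM_fin inj]) (simp_all add: piv above)
  have sub: "dcoef ` ?I \<subseteq> d2 ` Apiece 3 q t"
  proof
    fix y assume "y \<in> dcoef ` ?I"
    then obtain m where m: "m \<in> ?I" "y = dcoef m" by blast
    have "delta m \<in> Apiece 3 q t" using m(1) unfolding Apiece3 MM_def delta_def by auto
    moreover have "y = d2 (delta m)" using m(2) d2_delta by simp
    ultimately show "y \<in> d2 ` Apiece 3 q t" by blast
  qed
  have "card (dcoef ` ?I) \<le> V.dim (d2 ` Apiece 3 q t)"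
    using indep_le_dim[OF pi2 sub[unfolded Apiece3] R_span[OF fin_mons]] fin_mons unfolding Apiece3 by simp
  thus ?thesis using card_image[OF pi1] by simp
qed

definition xv :: "mon \<Rightarrow> mon \<Rightarrow> rat" where
  "xv p = (if inH p then hvec p else dcoef (psi p))"

lemma Z_lower: "card (MM q (Suc t)) + card (HH q t) \<le> V.dim {f\<in>Apiece 3 q t. d2 f = (\<lambda>_. 0)}"
proof -
  let ?P = "phi ` MM q (Suc t)"
  let ?I = "?P \<union> HH q t"
  have M3: "m \<in> Mon3" "inM m" "qdeg m = q" "tdeg m = Suc t" if "m \<in> MM q (Suc t)" for m
    using that unfolding MM_def mons3 by auto
  have H3: "p \<in> Mon3" "inH p" "qdeg p = q" "tdeg p = t" if "p \<in> HH q t" for p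
    using that unfolding HH_def mons3 by auto
  have P3: "phi m \<in> Mon3" "\<not> inH (phi m)" "psi (phi m) = m" "xv (phi m) = dcoef m" if "m \<in> MM q (Suc t)" for m
    using M_props(1,5)[OF M3(1,2)[OF that]] by (auto simp: xv_def)
  have finI: "finite ?I" using MM_fin HH_fin by simp
  have I3: "?I \<subseteq> Mon3" using P3 H3 by blast
  have inj: "inj_on (\<lambda>p. key (id p)) ?I"
    using inj_on_subset[OF key_inj I3] by simp
  have piv: "xv p p \<noteq> 0" if pI: "p \<in> ?I" for p
  proof (cases "p \<in> HH q t")
    case True thus ?thesis using H_props(2)[OF H3(1,2)[OF True]] H3(2)[OF True] by (simp add: xv_def)
  next
    case False
    then obtain m where m: "m \<in> MM q (Suc t)" "p = phi m" using pI by blast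
    thus ?thesis using P3[OF m(1)] M_props(2)[OF M3(1,2)[OF m(1)]] by simp
  qed
  have above: "xv p m' = 0" if pI: "p \<in> ?I" and k: "key p < key m'" for p m'
  proof (cases "p \<in> HH q t")
    case True thus ?thesis using H_props(3)[OF H3(1,2)[OF True]] H3(2)[OF True] k by (simp add: xv_def)
  next
    case False
    then obtain m where m: "m \<in> MM q (Suc t)" "p = phi m" using pI by blast
    thus ?thesis using P3[OF m(1)] M_props(3)[OF M3(1,2)[OF m(1)]] k by simp
  qed
  have pi1: "inj_on xv ?I"
    by (rule pivot_indep(1)[where I="?I" and key=key and p=id and x=xv, OF finI inj]) (simp_all add: piv above)
  have pi2: "V.independent (xv ` ?I)"
    by (rule pivot_indep(2)[where I="?I" and key=key and p=id and x=xv, OF finI inj]) (simp_all add: piv above)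
  have sub: "xv ` ?I \<subseteq> {f\<in>Apiece 3 q t. d2 f = (\<lambda>_. 0)}"
  proof
    fix y assume "y \<in> xv ` ?I"
    then obtain p where p: "p \<in> ?I" "y = xv p" by blast
    show "y \<in> {f\<in>Apiece 3 q t. d2 f = (\<lambda>_. 0)}"
    proof (cases "p \<in> HH q t")
      case True
      have y: "y = hvec p" using p(2) H3(2)[OF True] by (simp add: xv_def)
      have "\<forall>m'. hvec p m' \<noteq> 0 \<longrightarrow> m' \<in> mons 3 q t"
        using H_props(4)[OF H3(1,2)[OF True]] H3(3,4)[OF True] unfolding mons3 by auto
      thus ?thesis using y H_props(1)[OF H3(1,2)[OF True]] unfolding Apiece3 by simp
    next
      case False
      then obtain m where m: "m \<in> MM q (Suc t)" "p = phi m" using p(1) by blast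
      have y: "y = dcoef m" using p(2) m P3[OF m(1)] by simp
      have "\<forall>m'. dcoef m m' \<noteq> 0 \<longrightarrow> m' \<in> mons 3 q t"
        using M_props(4)[OF M3(1,2)[OF m(1)]] M3(3,4)[OF m(1)] unfolding mons3 by auto
      moreover have "finite (snd m)" using M3(1)[OF m(1)] unfolding Mon3_def using finite_subset by auto
      ultimately show ?thesis using y d2_dcoef unfolding Apiece3 by simp
    qed
  qed
  have Zsp: "{f\<in>Apiece 3 q t. d2 f = (\<lambda>_. 0)} \<subseteq> V.span (delta ` mons 3 q t)"
    using Apiece_span[OF fin_mons] unfolding Apiece3 by blast
  have "card (xv ` ?I) \<le> V.dim {f\<in>Apiece 3 q t. d2 f = (\<lambda>_. 0)}"
    using indep_le_dim[OF pi2 sub Zsp] fin_mons by simp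
  moreover have "card (xv ` ?I) = card ?I" using card_image[OF pi1] .
  moreover have "?P \<inter> HH q t = {}" using P3 H3 by blast
  hence "card ?I = card ?P + card (HH q t)" using MM_fin HH_fin by (simp add: card_Un_disjoint)
  moreover have "card ?P = card (MM q (Suc t))" using card_image[OF phi_inj] .
  ultimately show ?thesis by simp
qed

lemma partition_card: "card (mons 3 q t) = card (MM q t) + card (MM q (Suc t)) + card (HH q t)"
proof -
  let ?P = "phi ` MM q (Suc t)"
  have M3: "m \<in> Mon3" "inM m" "qdeg m = q" "tdeg m = Suc t" if "m \<in> MM q (Suc t)" for m
    using that unfolding MM_def mons3 by auto
  have eq: "mons 3 q t = MM q t \<union> ?P \<union> HH q t"
  proof (rule set_eqI, rule iffI)
    fix m assume m: "m \<in> mons 3 q t"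
    hence m3: "m \<in> Mon3" "qdeg m = q" "tdeg m = t" unfolding mons3 by auto
    show "m \<in> MM q t \<union> ?P \<union> HH q t"
    proof (cases "inM m \<or> inH m")
      case True thus ?thesis using m unfolding MM_def HH_def by auto
    next
      case False
      hence ps: "psi m \<in> Mon3 \<and> inM (psi m) \<and> phi (psi m) = m" using nonM_props[OF m3(1)] by simp
      have "qdeg (phi (psi m)) = qdeg (psi m) \<and> Suc (tdeg (phi (psi m))) = tdeg (psi m)"
        using M_props(1)[of "psi m"] ps by simp
      hence "qdeg (psi m) = q" "tdeg (psi m) = Suc t" using ps m3 by simp_all
      hence "psi m \<in> MM q (Suc t)" using ps unfolding MM_def mons3 by simp
      hence "phi (psi m) \<in> ?P" by blast
      thus ?thesis using ps by simp
    qed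
  next
    fix m assume "m \<in> MM q t \<union> ?P \<union> HH q t"
    moreover have "phi x \<in> mons 3 q t" if "x \<in> MM q (Suc t)" for x
      using M_props(1)[OF M3(1,2)[OF that]] M3(3,4)[OF that] unfolding mons3 by simp
    ultimately show "m \<in> mons 3 q t" unfolding MM_def HH_def by blast
  qed
  have d1: "MM q t \<inter> ?P = {}"
  proof -
    have "\<not> inM (phi x)" if "x \<in> MM q (Suc t)" for x using M_props(5)[OF M3(1,2)[OF that]] by simp
    thus ?thesis unfolding MM_def by blast
  qed
  have d2: "(MM q t \<union> ?P) \<inter> HH q t = {}"
  proof -
    have "\<not> inH (phi x)" if "x \<in> MM q (Suc t)" for x using M_props(5)[OF M3(1,2)[OF that]] by simp
    moreover have "\<not> inH x" if "x \<in> MM q t" for x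
      using that M_props(6)[of x] unfolding MM_def mons3 by auto
    ultimately show ?thesis unfolding HH_def by blast
  qed
  have "card (mons 3 q t) = card (MM q t \<union> ?P) + card (HH q t)"
    unfolding eq using d2 MM_fin HH_fin by (simp add: card_Un_disjoint)
  also have "card (MM q t \<union> ?P) = card (MM q t) + card ?P"
    using d1 MM_fin by (simp add: card_Un_disjoint)
  also have "card ?P = card (MM q (Suc t))" using card_image[OF phi_inj] .
  finally show ?thesis by simp
qed

lemma dimR: "V.dim (d2 ` Apiece 3 q t) = card (MM q t)"
  and dimZ: "V.dim {f\<in>Apiece 3 q t. d2 f = (\<lambda>_. 0)} = card (MM q (Suc t)) + card (HH q t)"
proof -
  have rn: "V.dim {f\<in>Apiece 3 q t. d2 f = (\<lambda>_. 0)} + V.dim (d2 ` Apiece 3 q t) \<le> card (mons 3 q t)"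
    using rank_nullity_le[OF fin_mons, of q t] unfolding Apiece3 by simp
  show "V.dim (d2 ` Apiece 3 q t) = card (MM q t)"
    using rn R_lower[of q t] Z_lower[of q t] partition_card[of q t] by linarith
  show "V.dim {f\<in>Apiece 3 q t. d2 f = (\<lambda>_. 0)} = card (MM q (Suc t)) + card (HH q t)"
    using rn R_lower[of q t] Z_lower[of q t] partition_card[of q t] by linarith
qed

lemma dimKh_HH: "dimKh 3 q t = card (HH q t)"
  unfolding dimKh_def using dimR[of q "Suc t"] dimZ[of q t] by simp

definition sh :: "mon \<Rightarrow> mon" where
  "sh m = (E (fst m 0) (fst m 1) (Suc (fst m 2)), snd m)"

definition BB :: "nat \<Rightarrow> nat \<Rightarrow> mon set" where
  "BB q t = {m\<in>HH q t. fst m 2 = 0}"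

lemma sh_E: "sh (E a b c, S) = (E a b (Suc c), S)" by (simp add: sh_def)

lemma sh_props:
  assumes "m \<in> Mon3"
  shows "sh m \<in> Mon3" "inH (sh m) = inH m" "qdeg (sh m) = qdeg m + 6" "tdeg (sh m) = tdeg m + 4" "fst (sh m) 2 \<noteq> 0"
proof -
  obtain a b c S where mE: "m = (E a b c, S)" and S: "S \<subseteq> {..<3}" using assms by (rule Mon3_cases)
  show "sh m \<in> Mon3" "inH (sh m) = inH m" "qdeg (sh m) = qdeg m + 6" "tdeg (sh m) = tdeg m + 4" "fst (sh m) 2 \<noteq> 0"
    using S unfolding mE sh_E by (simp_all add: qdeg_E tdeg_E inH_def)
qed

lemma sh_inj: "inj_on sh Mon3"
proof (rule inj_onI)
  fix m m' assume m: "m \<in> Mon3" and m': "m' \<in> Mon3" and e: "sh m = sh m'"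
  hence "fst m 0 = fst m' 0" "fst m (Suc 0) = fst m' (Suc 0)" "fst m 2 = fst m' 2" "snd m = snd m'"
    by (simp_all add: sh_def)
  hence "(E (fst m 0) (fst m (Suc 0)) (fst m 2), snd m) = (E (fst m' 0) (fst m' (Suc 0)) (fst m' 2), snd m')"
    by simp
  thus "m = m'" using Mon3_E[OF m] Mon3_E[OF m'] by simp
qed

lemma HH_rec:
  "card (HH q t) = card (BB q t) + (if 6 \<le> q \<and> 4 \<le> t then card (HH (q-6) (t-4)) else 0)"
proof -
  let ?C = "{m\<in>HH q t. fst m 2 \<noteq> 0}"
  have split: "HH q t = BB q t \<union> ?C" unfolding BB_def by auto
  have disj: "BB q t \<inter> ?C = {}" unfolding BB_def by auto
  have finB: "finite (BB q t)" unfolding BB_def using HH_fin by simp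
  have finC: "finite ?C" using HH_fin by simp
  have C: "?C = (if 6 \<le> q \<and> 4 \<le> t then sh ` HH (q-6) (t-4) else {})"
  proof (cases "6 \<le> q \<and> 4 \<le> t")
    case True
    have "?C = sh ` HH (q-6) (t-4)"
    proof (rule set_eqI, rule iffI)
      fix m assume m: "m \<in> ?C"
      hence m3: "m \<in> Mon3" "inH m" "qdeg m = q" "tdeg m = t" "fst m 2 \<noteq> 0" unfolding HH_def mons3 by auto
      obtain a b c S where mE: "m = (E a b c, S)" and S: "S \<subseteq> {..<3}" using m3(1) by (rule Mon3_cases)
      have c0: "c \<noteq> 0" using m3(5) mE by simp
      let ?m' = "(E a b (c - 1), S)"
      have m'3: "?m' \<in> Mon3" using S by simp
      have "sh ?m' = m" using c0 mE by (simp add: sh_E)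
      moreover have "?m' \<in> HH (q-6) (t-4)"
        using sh_props[OF m'3] m3 \<open>sh ?m' = m\<close> m'3 unfolding HH_def mons3 by auto
      ultimately show "m \<in> sh ` HH (q-6) (t-4)" by blast
    next
      fix m assume "m \<in> sh ` HH (q-6) (t-4)"
      then obtain m' where m': "m' \<in> HH (q-6) (t-4)" "m = sh m'" by blast
      hence m'3: "m' \<in> Mon3" "inH m'" "qdeg m' = q - 6" "tdeg m' = t - 4" unfolding HH_def mons3 by auto
      show "m \<in> ?C" using sh_props[OF m'3(1)] m'3 m'(2) True unfolding HH_def mons3 by auto
    qed
    thus ?thesis unfolding if_P[OF True] .
  next
    case False
    have C0: "?C = {}"
    proof (rule ccontr)
      assume "?C \<noteq> {}"
      then obtain m where m: "m \<in> ?C" by blast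
      hence m3: "m \<in> Mon3" "qdeg m = q" "tdeg m = t" "fst m 2 \<noteq> 0" unfolding HH_def mons3 by auto
      obtain a b c S where mE: "m = (E a b c, S)" and S: "S \<subseteq> {..<3}" using m3(1) by (rule Mon3_cases)
      have "6 \<le> q" "4 \<le> t" using m3 mE by (simp_all add: qdeg_E tdeg_E)
      thus False using False by simp
    qed
    show ?thesis unfolding if_not_P[OF False] by (rule C0)
  qed
  have "card (HH q t) = card (BB q t \<union> ?C)" using split by (rule arg_cong)
  also have "\<dots> = card (BB q t) + card ?C" by (rule card_Un_disjoint[OF finB finC disj])
  also have "card ?C = (if 6 \<le> q \<and> 4 \<le> t then card (HH (q-6) (t-4)) else 0)"
  proof (cases "6 \<le> q \<and> 4 \<le> t")
    case True
    have "inj_on sh (HH (q-6) (t-4))" using inj_on_subset[OF sh_inj] unfolding HH_def mons3 by auto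
    thus ?thesis using C unfolding if_P[OF True] by (simp add: card_image)
  next
    case False
    have "?C = {}" using C unfolding if_not_P[OF False] .
    thus ?thesis unfolding if_not_P[OF False] by (simp only: card.empty)
  qed
  finally show ?thesis .
qed

definition H0 :: "mon set" where
  "H0 = {(E 0 0 0, {}), (E 1 0 0, {}), (E 0 1 0, {}), (E 0 1 0, {0}), (E 0 1 0, {1}), (E 1 1 0, {1})}"

lemma BB_H0: "BB q t = {h\<in>H0. qdeg h = q \<and> tdeg h = t}"
proof (rule set_eqI, rule iffI)
  fix m assume "m \<in> BB q t"
  hence m3: "m \<in> Mon3" "inH m" "fst m 2 = 0" "qdeg m = q" "tdeg m = t" unfolding BB_def HH_def mons3 by auto
  obtain a b c S where mE: "m = (E a b c, S)" and S: "S \<subseteq> {..<3}" using m3(1) by (rule Mon3_cases)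
  have "m \<in> H0"
    using sub3_cases[OF S] m3(2,3) unfolding mE by (elim disjE) (auto simp: H0_def inH_def bits_def)
  thus "m \<in> {h\<in>H0. qdeg h = q \<and> tdeg h = t}" using m3 by simp
next
  fix m assume "m \<in> {h\<in>H0. qdeg h = q \<and> tdeg h = t}"
  hence "m \<in> H0" "qdeg m = q" "tdeg m = t" by auto
  moreover have "h \<in> Mon3 \<and> inH h \<and> fst h 2 = 0" if "h \<in> H0" for h
    using that unfolding H0_def by (auto simp: inH_def bits_def)
  ultimately show "m \<in> BB q t" unfolding BB_def HH_def mons3 by auto
qed

definition base :: "(nat \<times> nat) set" where
  "base = {(0,0),(2,0),(4,2),(8,3),(10,5),(12,5)}"

lemma card_filter_inj:
  assumes "finite A" "inj_on f A"
  shows "card {x\<in>A. f x = y} = (if y \<in> f ` A then 1 else 0)"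
proof (cases "y \<in> f ` A")
  case True
  then obtain x0 where x0: "x0 \<in> A" "y = f x0" by blast
  have "{x\<in>A. f x = y} = {x0}" using x0 assms(2) by (auto dest: inj_onD)
  thus ?thesis using True by simp
next
  case False
  hence e: "{x\<in>A. f x = y} = {}" by auto
  show ?thesis unfolding e if_not_P[OF False] by simp
qed

lemma card_BB: "card (BB q t) = (if (q,t) \<in> base then 1 else 0)"
proof -
  let ?f = "\<lambda>h. (qdeg h, tdeg h)"
  have "BB q t = {h\<in>H0. ?f h = (q,t)}" unfolding BB_H0 by simp
  moreover have "inj_on ?f H0" unfolding H0_def by (simp add: qdeg_E tdeg_E)
  moreover have "?f ` H0 = base" unfolding H0_def base_def by (simp add: qdeg_E tdeg_E)
  moreover have "finite H0" unfolding H0_def by simp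
  ultimately show ?thesis using card_filter_inj[of H0 ?f "(q,t)"] by simp
qed

unbundle fps_syntax

definition Dq :: "rat fps fps" where "Dq = 1 - qvar^6 * tvar^4"
definition Gq :: "rat fps fps" where
  "Gq = 1 + qvar^2 + qvar^4 * tvar^2 + qvar^8 * tvar^3 + qvar^10 * tvar^5 + qvar^12 * tvar^5"

lemma P_nth: "PoincareKh 3 $ a $ b = of_nat (card (HH a b))"
  by (simp add: PoincareKh_def dimKh_HH)

lemma G_nth: "Gq $ a $ b = (if (a,b) \<in> base then 1 else 0)"
  by (simp add: Gq_def qvar_def tvar_def base_def fps_X_power_mult_right_nth)

lemma PD: "PoincareKh 3 * Dq = Gq"
proof -
  let ?P = "PoincareKh 3"
  have e: "?P * Dq = ?P - fps_X^6 * (?P * fps_const (fps_X^4))"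
    by (simp add: Dq_def qvar_def tvar_def algebra_simps)
  show ?thesis
  proof (rule fps_ext, rule fps_ext)
    fix a b
    have "(?P * Dq) $ a $ b = ?P $ a $ b - (if a < 6 then 0 else if b < 4 then 0 else ?P $ (a-6) $ (b-4))"
      unfolding e by (simp add: fps_X_power_mult_nth fps_X_power_mult_right_nth)
    also have "\<dots> = of_nat (card (BB a b))"
      unfolding P_nth using HH_rec[of a b] by auto
    also have "\<dots> = Gq $ a $ b" unfolding G_nth card_BB by simp
    finally show "(?P * Dq) $ a $ b = Gq $ a $ b" .
  qed
qed

lemma D_inv: "Dq * inverse Dq = 1"
proof -
  have d0: "Dq $ 0 = 1" by (simp add: Dq_def qvar_def tvar_def fps_X_power_mult_nth)
  have "Dq * fps_right_inverse Dq (inverse (Dq $ 0)) = 1"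
    by (rule fps_right_inverse) (simp add: d0)
  thus ?thesis by (simp add: fps_inverse_def)
qed

theorem mainTheorem4:
  shows "PoincareKh 3 =
    (1 + qvar^10 * tvar^5) * (1 + qvar^2 + qvar^4 * tvar^2) * inverse (1 - qvar^6 * tvar^4)
    + qvar^8 * tvar^3"
proof -
  let ?P = "PoincareKh 3" and ?I = "inverse Dq"
  have "?P = ?P * (Dq * ?I)" using D_inv by simp
  also have "\<dots> = Gq * ?I" using PD by (simp add: mult.assoc[symmetric])
  also have "Gq = (1 + qvar^10 * tvar^5) * (1 + qvar^2 + qvar^4 * tvar^2) + qvar^8 * tvar^3 * Dq"
  proof -
    have h: "qvar^6 * (tvar^7 * qvar^8) = tvar^7 * qvar^14" "qvar\<^sup>2 * (tvar^5 * qvar^10) = tvar^5 * qvar^12"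
      by (simp_all add: mult.left_commute mult.commute flip: power_add)
    have h3: "qvar^8 * (tvar^3 * (qvar^6 * tvar^4)) = tvar^7 * qvar^14"
    proof -
      have "qvar^8 * (tvar^3 * (qvar^6 * tvar^4)) = (qvar^8 * qvar^6) * (tvar^3 * tvar^4)"
        by (simp only: ac_simps)
      also have "\<dots> = qvar^14 * tvar^7" by (simp flip: power_add)
      finally show ?thesis by (simp only: ac_simps)
    qed
    show ?thesis unfolding Gq_def Dq_def by (simp add: algebra_simps h h3)
  qed
  also have "\<dots> * ?I = (1 + qvar^10 * tvar^5) * (1 + qvar^2 + qvar^4 * tvar^2) * ?I + qvar^8 * tvar^3 * (Dq * ?I)"
    by (simp add: algebra_simps)
  also have "\<dots> = (1 + qvar^10 * tvar^5) * (1 + qvar^2 + qvar^4 * tvar^2) * ?I + qvar^8 * tvar^3"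
    using D_inv by simp
  finally show ?thesis unfolding Dq_def .
qed

end
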